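(* In the endogenous-network setting described in the context, let $(\delta,\xi)$ be an equilibrium of the endogenous friend game that involves at least two degrees. Then $\delta$ is nondecreasing on $S$, and for every $\theta\in S$ with $\delta(\theta)>0$, $$\xi(\theta)>x^{friend}_{\perp}(\theta,\delta(\theta))>x^{soc}_{end}(\theta,\delta(\theta))=x^{soc}_{\perp}(\theta,\delta(\theta)).$$
   Context: Fix an integer $n\ge2$, parameters $a>0$, $\phi\in\mathbb{R}$, $c>a(n-1)$ and $k>a(n-1)$. Agents' types are i.i.d. draws from an atomless probability distribution $F$ with compact support $S\subset[0,\infty)$; $\mathrm{E}$ denotes expectation with $\theta\sim F$. A symmetric pure-strategy profile is a pair of measurable functions $\delta:S\to\{0,1,\dots,n-1\}$ (degree choice) and bounded $\xi:S\to[0,\infty)$ (action choice) with $\mathrm{E}[\delta(\theta)]>0$; for bounded measurable $h$ on $S$ write $\widetilde{\mathrm{E}}[h(\theta)]=\mathrm{E}[\delta(\theta)h(\theta)]/\mathrm{E}[\delta(\theta)]$ (expectation over a neighbor). The profile is an equilibrium of the endogenous friend game if for every $\theta\in S$, the pair $(\delta(\theta),\xi(\theta))$ maximizes over $(d',y)\in\{0,\dots,n-1\}\times[0,\infty)$ the payoff $\theta y+a\,y\,d'\,\widetilde{\mathrm{E}}[\xi(\theta_j)]-\frac{c}{2}y^2-\phi(n-1)\mathrm{E}[\xi(\theta_j)]-\frac{k}{2}d'^2$. It involves at least two degrees if $\delta(\theta)$ takes at least two distinct values, each with positive $F$-probability. Comparison games: for a probability distribution $Q$ on $S\times\{0,\dots,n-1\}$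 of a pair $(\theta,D)$ with $\mathrm{E}_Q[D]>0$, let $\widetilde{\mathrm{E}}_Q[h(\theta,D)]=\mathrm{E}_Q[D\,h(\theta,D)]/\mathrm{E}_Q[D]$. A bounded measurable $z:S\times\{0,\dots,n-1\}\to[0,\infty)$ is an equilibrium of the friend game for $Q$ if for every $(\theta,d)$, $z(\theta,d)$ maximizes $\theta y+a\,y\,d\,\widetilde{\mathrm{E}}_Q[z(\theta',D')]-\frac{c}{2}y^2$ over $y\ge0$; it is an equilibrium of the society-wide game for $Q$ if the same holds with $\mathrm{E}_Q$ in place of $\widetilde{\mathrm{E}}_Q$. Since $c>a(n-1)$, each such game has a unique equilibrium. Let $Q_{end}$ be the law of $(\theta,\delta(\theta))$ with $\theta\sim F$, and $Q_\perp$ the product of $F$ and the law of $\delta(\theta)$. Then $x^{friend}_\perp$ is the equilibrium of the friend game for $Q_\perp$, and $x^{soc}_{end}$, $x^{soc}_\perp$ are the equilibria of the society-wide game for $Q_{end}$ and $Q_\perp$ respectively. *)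

theory Defs
  imports "HOL-Probability.Probability"
begin

definition measure_support :: "real measure \<Rightarrow> real set" where
  "measure_support F = {x. \<forall>U. open U \<and> x \<in> U \<longrightarrow> emeasure F U > 0}"

definition nbr_exp :: "real measure \<Rightarrow> (real \<Rightarrow> nat) \<Rightarrow> (real \<Rightarrow> real) \<Rightarrow> real" where
  "nbr_exp F \<delta> h = (\<integral>\<theta>. real (\<delta> \<theta>) * h \<theta> \<partial>F) / (\<integral>\<theta>. real (\<delta> \<theta>) \<partial>F)"

definition endo_payoff ::
  "nat \<Rightarrow> real \<Rightarrow> real \<Rightarrow> real \<Rightarrow> real \<Rightarrow> real measure \<Rightarrow> (real \<Rightarrow> nat) \<Rightarrow> (real \<Rightarrow> real)
     \<Rightarrow> real \<Rightarrow> nat \<Rightarrow> real \<Rightarrow> real" where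
  "endo_payoff n a c k \<phi> F \<delta> \<xi> \<theta> d y =
     \<theta> * y + a * y * real d * nbr_exp F \<delta> \<xi> - c / 2 * y\<^sup>2
     - \<phi> * (real n - 1) * (\<integral>\<theta>'. \<xi> \<theta>' \<partial>F) - k / 2 * (real d)\<^sup>2"

text \<open>Symmetric pure-strategy equilibrium of the endogenous friend game
  (strategies are functions on S; values outside S are irrelevant).\<close>
definition endo_friend_eq ::
  "nat \<Rightarrow> real \<Rightarrow> real \<Rightarrow> real \<Rightarrow> real \<Rightarrow> real measure \<Rightarrow> real set \<Rightarrow> (real \<Rightarrow> nat) \<Rightarrow> (real \<Rightarrow> real) \<Rightarrow> bool" where
  "endo_friend_eq n a c k \<phi> F S \<delta> \<xi> \<longleftrightarrow>
     \<delta> \<in> measurable F (count_space UNIV) \<and> \<xi> \<in> borel_measurable F \<and>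
     (\<forall>\<theta>\<in>S. \<delta> \<theta> \<le> n - 1) \<and> (\<forall>\<theta>\<in>S. 0 \<le> \<xi> \<theta>) \<and> (\<exists>B. \<forall>\<theta>\<in>S. \<xi> \<theta> \<le> B) \<and>
     (\<integral>\<theta>. real (\<delta> \<theta>) \<partial>F) > 0 \<and>
     (\<forall>\<theta>\<in>S. \<forall>d'. \<forall>y. d' \<le> n - 1 \<and> 0 \<le> y \<longrightarrow>
        endo_payoff n a c k \<phi> F \<delta> \<xi> \<theta> d' y \<le> endo_payoff n a c k \<phi> F \<delta> \<xi> \<theta> (\<delta> \<theta>) (\<xi> \<theta>))"

definition two_degrees :: "real measure \<Rightarrow> (real \<Rightarrow> nat) \<Rightarrow> bool" where
  "two_degrees F \<delta> \<longleftrightarrow> (\<exists>d1 d2. d1 \<noteq> d2 \<and>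
      measure F {\<theta> \<in> space F. \<delta> \<theta> = d1} > 0 \<and> measure F {\<theta> \<in> space F. \<delta> \<theta> = d2} > 0)"

definition Q_end :: "real measure \<Rightarrow> (real \<Rightarrow> nat) \<Rightarrow> (real \<times> nat) measure" where
  "Q_end F \<delta> = distr F (borel \<Otimes>\<^sub>M count_space UNIV) (\<lambda>\<theta>. (\<theta>, \<delta> \<theta>))"

definition Q_perp :: "real measure \<Rightarrow> (real \<Rightarrow> nat) \<Rightarrow> (real \<times> nat) measure" where
  "Q_perp F \<delta> = F \<Otimes>\<^sub>M distr F (count_space UNIV) \<delta>"

definition Q_exp :: "(real \<times> nat) measure \<Rightarrow> (real \<times> nat \<Rightarrow> real) \<Rightarrow> real" where
  "Q_exp Q h = (\<integral>p. h p \<partial>Q)"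

definition Q_nbr_exp :: "(real \<times> nat) measure \<Rightarrow> (real \<times> nat \<Rightarrow> real) \<Rightarrow> real" where
  "Q_nbr_exp Q h = (\<integral>p. real (snd p) * h p \<partial>Q) / (\<integral>p. real (snd p) \<partial>Q)"

definition comp_eq ::
  "nat \<Rightarrow> real \<Rightarrow> real \<Rightarrow> real set \<Rightarrow> (real \<times> nat) measure \<Rightarrow> ((real \<times> nat \<Rightarrow> real) \<Rightarrow> real)
     \<Rightarrow> (real \<Rightarrow> nat \<Rightarrow> real) \<Rightarrow> bool" where
  "comp_eq n a c S Q G z \<longleftrightarrow>
     (\<lambda>p. z (fst p) (snd p)) \<in> borel_measurable Q \<and>
     (\<exists>B. \<forall>\<theta>\<in>S. \<forall>d\<le>n - 1. \<bar>z \<theta> d\<bar> \<le> B) \<and>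
     (\<forall>\<theta>\<in>S. \<forall>d\<le>n - 1. 0 \<le> z \<theta> d) \<and>
     (\<forall>\<theta>\<in>S. \<forall>d\<le>n - 1. \<forall>y\<ge>0.
        \<theta> * y + a * y * real d * G (\<lambda>p. z (fst p) (snd p)) - c / 2 * y\<^sup>2
        \<le> \<theta> * z \<theta> d + a * z \<theta> d * real d * G (\<lambda>p. z (fst p) (snd p)) - c / 2 * (z \<theta> d)\<^sup>2)"

definition friend_eq where
  "friend_eq n a c S Q z \<longleftrightarrow> comp_eq n a c S Q (Q_nbr_exp Q) z"

definition soc_eq where
  "soc_eq n a c S Q z \<longleftrightarrow> comp_eq n a c S Q (Q_exp Q) z"

end

theory Submission
  imports Defs
begin


lemma opt_unique:
  fixes B c x :: real
  assumes "c > 0" "\<And>y. 0 \<le> y \<Longrightarrow> B*y - c/2*y\<^sup>2 \<le> B*x - c/2*x\<^sup>2" "0 \<le> B"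
  shows "x = B / c"
proof -
  have "B*(B/c) - c/2*(B/c)\<^sup>2 \<le> B*x - c/2*x\<^sup>2" using assms by (intro assms(2)) simp
  moreover have "c/2 * (x - B/c)\<^sup>2 = (B*(B/c) - c/2*(B/c)\<^sup>2) - (B*x - c/2*x\<^sup>2)"
    using assms(1) by (simp add: power2_eq_square field_simps)
  ultimately have "c/2 * (x - B/c)\<^sup>2 \<le> 0" by linarith
  then have "(x - B/c)\<^sup>2 \<le> 0" using assms(1)
    by (smt (verit) mult_pos_pos zero_less_power2 divide_pos_pos)
  then show ?thesis by simp
qed

lemma AE_support:
  assumes sF: "sets F = sets borel"
  shows "AE x in F. x \<in> measure_support F"
proof -
  define I where "I = {pq::rat\<times>rat. emeasure F {real_of_rat (fst pq)<..<real_of_rat (snd pq)} = 0}"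
  define N where "N = (\<Union>pq\<in>I. {real_of_rat (fst pq)<..<real_of_rat (snd pq)})"
  have "N \<in> null_sets F"
    unfolding N_def
  proof (rule null_sets_UN')
    show "countable I" by (rule countable_subset[OF subset_UNIV]) simp
    fix pq assume "pq \<in> I"
    then show "{real_of_rat (fst pq)<..<real_of_rat (snd pq)} \<in> null_sets F"
      by (simp add: I_def null_sets_def sF)
  qed
  moreover have "{x\<in>space F. x \<notin> measure_support F} \<subseteq> N"
  proof
    fix x assume "x \<in> {x\<in>space F. x \<notin> measure_support F}"
    then obtain U where U: "open U" "x \<in> U" "\<not> emeasure F U > 0"
      by (auto simp: measure_support_def)
    then have U0: "emeasure F U = 0" by (simp add: not_gr_zero)
    obtain e where e: "e > 0" "\<And>y. dist y x < e \<Longrightarrow> y \<in> U"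
      using U(1,2) open_dist by blast
    obtain r1 where r1: "r1 \<in> \<rat>" "x - e < r1" "r1 < x" using Rats_dense_in_real[of "x-e" x] e by auto
    obtain r2 where r2: "r2 \<in> \<rat>" "x < r2" "r2 < x + e" using Rats_dense_in_real[of x "x+e"] e by auto
    obtain p where p: "r1 = real_of_rat p" using r1(1) Rats_cases by blast
    obtain q where q: "r2 = real_of_rat q" using r2(1) Rats_cases by blast
    have sub: "{r1<..<r2} \<subseteq> U"
    proof
      fix y assume "y \<in> {r1<..<r2}"
      then have "dist y x < e" using r1 r2 by (auto simp: dist_real_def)
      then show "y \<in> U" by (rule e(2))
    qed
    have "U \<in> sets F" using U(1) by (simp add: sF)
    then have "emeasure F {r1<..<r2} \<le> emeasure F U" by (rule emeasure_mono[OF sub])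
    then have "emeasure F {r1<..<r2} = 0" using U0 by simp
    then have "(p,q) \<in> I" using p q by (simp add: I_def)
    then show "x \<in> N" using r1 r2 p q unfolding N_def by force
  qed
  ultimately show ?thesis by (rule AE_I')
qed

lemma prod_int:
  fixes f g :: "_ \<Rightarrow> real"
  assumes "prob_space M1" "prob_space M2"
    and [measurable]: "f \<in> borel_measurable M1" "g \<in> borel_measurable M2"
    and "AE x in M1. \<bar>f x\<bar> \<le> B1" "AE y in M2. \<bar>g y\<bar> \<le> B2" "0 \<le> B1" "0 \<le> B2"
  shows "integrable (M1 \<Otimes>\<^sub>M M2) (\<lambda>p. f (fst p) * g (snd p))"
    and "(\<integral>p. f (fst p) * g (snd p) \<partial>(M1 \<Otimes>\<^sub>M M2)) = (\<integral>x. f x \<partial>M1) * (\<integral>y. g y \<partial>M2)"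
proof -
  interpret pair_prob_space M1 M2 using assms(1,2) by (simp add: pair_prob_space_def pair_sigma_finite_def prob_space_imp_sigma_finite)
  have "AE x in M1. AE y in M2. \<bar>f x * g y\<bar> \<le> B1 * B2"
    using assms(5) 
  proof eventually_elim
    case (elim x)
    show ?case using assms(6)
    proof eventually_elim
      case (elim y)
      then show ?case using \<open>\<bar>f x\<bar> \<le> B1\<close> assms(7,8) by (simp add: abs_mult mult_mono)
    qed
  qed
  moreover have "{x\<in>space (M1 \<Otimes>\<^sub>M M2). \<bar>f (fst x) * g (snd x)\<bar> \<le> B1 * B2} \<in> sets (M1 \<Otimes>\<^sub>M M2)"
    by measurable
  ultimately have "AE p in M1 \<Otimes>\<^sub>M M2. \<bar>f (fst p) * g (snd p)\<bar> \<le> B1 * B2"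
    using AE_pair_iff[where P="\<lambda>x y. \<bar>f x * g y\<bar> \<le> B1 * B2"] by simp
  then show int: "integrable (M1 \<Otimes>\<^sub>M M2) (\<lambda>p. f (fst p) * g (snd p))"
    by (intro P.integrable_const_bound[where B="B1*B2"]) auto
  show "(\<integral>p. f (fst p) * g (snd p) \<partial>(M1 \<Otimes>\<^sub>M M2)) = (\<integral>x. f x \<partial>M1) * (\<integral>y. g y \<partial>M2)"
    using integral_fst'[OF int] by simp
qed


lemma comp_formula:
  assumes "comp_eq n a c S Q G z" "c > 0" "S \<subseteq> {0..}" "a \<ge> 0"
    "0 \<le> G (\<lambda>p. z (fst p) (snd p))"
  shows "\<forall>\<theta>\<in>S. \<forall>d\<le>n - 1. z \<theta> d = (\<theta> + a * real d * G (\<lambda>p. z (fst p) (snd p))) / c"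
proof (intro ballI allI impI)
  fix \<theta> d assume th: "\<theta> \<in> S" and d: "d \<le> n - 1"
  let ?G = "G (\<lambda>p. z (fst p) (snd p))"
  show "z \<theta> d = (\<theta> + a * real d * ?G) / c"
  proof (rule opt_unique)
    show "0 < c" by fact
    show "0 \<le> \<theta> + a * real d * ?G" using th assms(3,4,5) by auto
    fix y :: real assume "0 \<le> y"
    then have "\<theta> * y + a * y * real d * ?G - c / 2 * y\<^sup>2
        \<le> \<theta> * z \<theta> d + a * z \<theta> d * real d * ?G - c / 2 * (z \<theta> d)\<^sup>2"
      using assms(1) th d unfolding comp_eq_def by blast
    then show "(\<theta> + a * real d * ?G) * y - c / 2 * y\<^sup>2 \<le> (\<theta> + a * real d * ?G) * z \<theta> d - c / 2 * (z \<theta> d)\<^sup>2"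
      by (simp add: algebra_simps)
  qed
qed

theorem proposition4:
  fixes n :: nat and a \<phi> c k :: real and F :: "real measure" and S :: "real set"
    and \<delta> :: "real \<Rightarrow> nat" and \<xi> :: "real \<Rightarrow> real"
    and x_friend_perp x_soc_end x_soc_perp :: "real \<Rightarrow> nat \<Rightarrow> real"
  assumes "n \<ge> 2" and "a > 0" and "c > a * (real n - 1)" and "k > a * (real n - 1)"
    and "prob_space F" and "sets F = sets borel"
    and "\<forall>x. measure F {x} = 0"
    and "S = measure_support F" and "compact S" and "S \<subseteq> {0..}"
    and "endo_friend_eq n a c k \<phi> F S \<delta> \<xi>"
    and "two_degrees F \<delta>"
    and "friend_eq n a c S (Q_perp F \<delta>) x_friend_perp"
    and "soc_eq n a c S (Q_end F \<delta>) x_soc_end"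
    and "soc_eq n a c S (Q_perp F \<delta>) x_soc_perp"
  shows "(\<forall>\<theta>1\<in>S. \<forall>\<theta>2\<in>S. \<theta>1 \<le> \<theta>2 \<longrightarrow> \<delta> \<theta>1 \<le> \<delta> \<theta>2) \<and>
         (\<forall>\<theta>\<in>S. \<delta> \<theta> > 0 \<longrightarrow>
            \<xi> \<theta> > x_friend_perp \<theta> (\<delta> \<theta>) \<and>
            x_friend_perp \<theta> (\<delta> \<theta>) > x_soc_end \<theta> (\<delta> \<theta>) \<and>
            x_soc_end \<theta> (\<delta> \<theta>) = x_soc_perp \<theta> (\<delta> \<theta>))"
proof -
  interpret F: prob_space F by fact
  have sF: "sets F = sets borel" by fact
  have dm[measurable]: "\<delta> \<in> measurable F (count_space UNIV)" and xm[measurable]: "\<xi> \<in> borel_measurable F"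
    and dle: "\<forall>\<theta>\<in>S. \<delta> \<theta> \<le> n - 1" and xnn: "\<forall>\<theta>\<in>S. 0 \<le> \<xi> \<theta>"
    and xbd: "\<exists>B. \<forall>\<theta>\<in>S. \<xi> \<theta> \<le> B"
    and mupos: "(\<integral>\<theta>. real (\<delta> \<theta>) \<partial>F) > 0"
    and opt: "\<forall>\<theta>\<in>S. \<forall>d'. \<forall>y. d' \<le> n - 1 \<and> 0 \<le> y \<longrightarrow>
        endo_payoff n a c k \<phi> F \<delta> \<xi> \<theta> d' y \<le> endo_payoff n a c k \<phi> F \<delta> \<xi> \<theta> (\<delta> \<theta>) (\<xi> \<theta>)"
    using assms(11) unfolding endo_friend_eq_def by auto
  have AES: "AE \<theta> in F. \<theta> \<in> S" using AE_support[OF sF] assms(8) by simp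
  have Ssets: "S \<in> sets F" using compact_imp_closed[OF assms(9)] by (simp add: sF)
  obtain Bt where Bt: "\<forall>\<theta>\<in>S. \<bar>\<theta>\<bar> \<le> Bt" using compact_imp_bounded[OF assms(9)] bounded_real by auto
  obtain Bx where Bx: "\<forall>\<theta>\<in>S. \<xi> \<theta> \<le> Bx" using xbd by auto
  have Snn: "\<forall>\<theta>\<in>S. 0 \<le> \<theta>" using assms(10) by auto
  have dR: "\<forall>\<theta>\<in>S. real (\<delta> \<theta>) \<le> real n - 1" using dle assms(1)
    by (metis Suc_1 Suc_le_lessD less_imp_le_nat of_nat_1 of_nat_diff of_nat_le_iff)
  have idm[measurable]: "(\<lambda>\<theta>. \<theta>) \<in> borel_measurable F" using measurable_ident_sets[OF sF] .
  have rdm[measurable]: "(\<lambda>\<theta>. real (\<delta> \<theta>)) \<in> borel_measurable F"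
    using measurable_compose[OF dm, of "\<lambda>d. real d" borel] by simp
  have n1: "real n - 1 \<ge> 1" using assms(1) by (simp add: le_diff_eq)
  have an1: "a * (real n - 1) > 0" using n1 assms(2) by simp
  have cpos: "c > 0" and kpos: "k > 0" using an1 assms(3,4) by linarith+
  have intS: "integrable F h" if "h \<in> borel_measurable F" "\<forall>\<theta>\<in>S. \<bar>h \<theta>\<bar> \<le> B" for h :: "real \<Rightarrow> real" and B :: real
  proof (rule F.integrable_const_bound[where B=B])
    show "AE x in F. norm (h x) \<le> B" using AES by eventually_elim (use that in auto)
  qed fact
  have bd_d: "\<forall>\<theta>\<in>S. \<bar>real (\<delta> \<theta>)\<bar> \<le> real n" using dR by auto
  have int_d: "integrable F (\<lambda>\<theta>. real (\<delta> \<theta>))" by (rule intS[OF rdm bd_d])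
  have int_t: "integrable F (\<lambda>\<theta>. \<theta>)" by (rule intS[OF idm Bt])
  have int_dd: "integrable F (\<lambda>\<theta>. (real (\<delta> \<theta>))\<^sup>2)"
    by (rule intS[of _ "real n ^ 2"]) (use bd_d in \<open>auto simp: abs_le_square_iff\<close>)
  have int_dt: "integrable F (\<lambda>\<theta>. real (\<delta> \<theta>) * \<theta>)"
    by (rule intS[of _ "real n * Bt"]) (use bd_d Bt in \<open>auto simp: abs_mult intro: mult_mono\<close>)
  have int_dx: "integrable F (\<lambda>\<theta>. real (\<delta> \<theta>) * \<xi> \<theta>)"
    by (rule intS[of _ "real n * Bx"]) (use bd_d Bx xnn in \<open>auto simp: abs_mult intro: mult_mono\<close>)
  define \<mu> where "\<mu> = (\<integral>\<theta>. real (\<delta> \<theta>) \<partial>F)"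
  define E2 where "E2 = (\<integral>\<theta>. (real (\<delta> \<theta>))\<^sup>2 \<partial>F)"
  define Et where "Et = (\<integral>\<theta>. \<theta> \<partial>F)"
  define Edt where "Edt = (\<integral>\<theta>. real (\<delta> \<theta>) * \<theta> \<partial>F)"
  define m where "m = nbr_exp F \<delta> \<xi>"
  have mu_pos: "\<mu> > 0" using mupos by (simp add: \<mu>_def)
  have m_def': "m = (\<integral>\<theta>. real (\<delta> \<theta>) * \<xi> \<theta> \<partial>F) / \<mu>" by (simp add: m_def nbr_exp_def \<mu>_def)
  have m_nn: "m \<ge> 0"
  proof -
    have "(\<integral>\<theta>. real (\<delta> \<theta>) * \<xi> \<theta> \<partial>F) \<ge> 0"
      by (rule integral_nonneg_AE) (use AES in eventually_elim, use xnn in auto)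
    then show ?thesis using mu_pos by (simp add: m_def')
  qed
  have pay: "endo_payoff n a c k \<phi> F \<delta> \<xi> \<theta> d y =
     \<theta> * y + a * y * real d * m - c / 2 * y\<^sup>2 - \<phi> * (real n - 1) * (\<integral>\<theta>'. \<xi> \<theta>' \<partial>F) - k / 2 * (real d)\<^sup>2"
    for \<theta> d y by (simp add: endo_payoff_def m_def)
  have xi_eq: "\<xi> \<theta> = (\<theta> + a * real (\<delta> \<theta>) * m) / c" if th: "\<theta> \<in> S" for \<theta>
  proof (rule opt_unique[OF cpos])
    show "0 \<le> \<theta> + a * real (\<delta> \<theta>) * m" using th Snn m_nn assms(2) by auto
    fix y :: real assume "0 \<le> y"
    then have "endo_payoff n a c k \<phi> F \<delta> \<xi> \<theta> (\<delta> \<theta>) y \<le> endo_payoff n a c k \<phi> F \<delta> \<xi> \<theta> (\<delta> \<theta>) (\<xi> \<theta>)"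
      using opt th dle by blast
    then show "(\<theta> + a * real (\<delta> \<theta>) * m) * y - c / 2 * y\<^sup>2 \<le> (\<theta> + a * real (\<delta> \<theta>) * m) * \<xi> \<theta> - c / 2 * (\<xi> \<theta>)\<^sup>2"
      unfolding pay by (simp add: algebra_simps)
  qed
  have Vle: "(\<theta> + a * real d * m)\<^sup>2 / (2*c) - k/2 * (real d)\<^sup>2
      \<le> (\<theta> + a * real (\<delta> \<theta>) * m)\<^sup>2 / (2*c) - k/2 * (real (\<delta> \<theta>))\<^sup>2"
    if th: "\<theta> \<in> S" and d: "d \<le> n - 1" for \<theta> d
  proof -
    have y0: "0 \<le> (\<theta> + a * real d * m) / c" using th Snn m_nn assms(2) cpos by auto
    have "endo_payoff n a c k \<phi> F \<delta> \<xi> \<theta> d ((\<theta> + a * real d * m) / c) \<le> endo_payoff n a c k \<phi> F \<delta> \<xi> \<theta> (\<delta> \<theta>) (\<xi> \<theta>)"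
      using opt th d y0 by blast
    moreover have "endo_payoff n a c k \<phi> F \<delta> \<xi> \<theta> d ((\<theta> + a * real d * m) / c) =
        (\<theta> + a * real d * m)\<^sup>2 / (2*c) - k/2 * (real d)\<^sup>2 - \<phi> * (real n - 1) * (\<integral>\<theta>'. \<xi> \<theta>' \<partial>F)"
      for d unfolding pay using cpos by (simp add: field_simps power2_eq_square)
    ultimately show ?thesis unfolding xi_eq[OF th] by simp
  qed
  have m_pos: "m > 0"
  proof (rule ccontr)
    assume "\<not> m > 0"
    then have m0: "m = 0" using m_nn by simp
    have d0: "\<delta> \<theta> = 0" if th: "\<theta> \<in> S" for \<theta>
    proof -
      have "(\<theta> + a * real 0 * m)\<^sup>2 / (2*c) - k/2 * (real (0::nat))\<^sup>2
        \<le> (\<theta> + a * real (\<delta> \<theta>) * m)\<^sup>2 / (2*c) - k/2 * (real (\<delta> \<theta>))\<^sup>2"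
        by (rule Vle[OF th]) simp
      then have "k/2 * (real (\<delta> \<theta>))\<^sup>2 \<le> 0" using m0 by simp
      then have "(real (\<delta> \<theta>))\<^sup>2 \<le> 0" using kpos
        by (smt (verit) half_gt_zero mult_pos_pos zero_less_power2)
      then show ?thesis by simp
    qed
    have "AE \<theta> in F. real (\<delta> \<theta>) = 0" using AES by eventually_elim (use d0 in auto)
    then have "\<mu> = (\<integral>\<theta>. 0 \<partial>F)" unfolding \<mu>_def by (intro integral_cong_AE) auto
    then show False using mu_pos by simp
  qed
  have mono: "\<forall>\<theta>1\<in>S. \<forall>\<theta>2\<in>S. \<theta>1 \<le> \<theta>2 \<longrightarrow> \<delta> \<theta>1 \<le> \<delta> \<theta>2"
  proof (intro ballI impI, rule ccontr)
    fix \<theta>1 \<theta>2 assume t1: "\<theta>1 \<in> S" and t2: "\<theta>2 \<in> S" and le: "\<theta>1 \<le> \<theta>2" and nle: "\<not> \<delta> \<theta>1 \<le> \<delta> \<theta>2"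
    define d1 where "d1 = real (\<delta> \<theta>1)"
    define d2 where "d2 = real (\<delta> \<theta>2)"
    have dd: "d1 > d2" using nle by (simp add: d1_def d2_def)
    have lt: "\<theta>1 < \<theta>2" using le nle by (cases "\<theta>1 = \<theta>2") auto
    have i1: "(\<theta>1 + a * d2 * m)\<^sup>2 / (2*c) - k/2 * d2\<^sup>2 \<le> (\<theta>1 + a * d1 * m)\<^sup>2 / (2*c) - k/2 * d1\<^sup>2"
      unfolding d1_def d2_def by (rule Vle[OF t1]) (use dle t2 in auto)
    have i2: "(\<theta>2 + a * d1 * m)\<^sup>2 / (2*c) - k/2 * d1\<^sup>2 \<le> (\<theta>2 + a * d2 * m)\<^sup>2 / (2*c) - k/2 * d2\<^sup>2"
      unfolding d1_def d2_def by (rule Vle[OF t2]) (use dle t1 in auto)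
    have eq: "(\<theta>1 + a * d2 * m)\<^sup>2 / (2*c) + (\<theta>2 + a * d1 * m)\<^sup>2 / (2*c)
        - (\<theta>1 + a * d1 * m)\<^sup>2 / (2*c) - (\<theta>2 + a * d2 * m)\<^sup>2 / (2*c)
        = (a * m * ((\<theta>2 - \<theta>1) * (d1 - d2))) / c"
      using cpos by (simp add: field_simps power2_eq_square)
    have "(a * m * ((\<theta>2 - \<theta>1) * (d1 - d2))) / c > 0"
      using cpos assms(2) m_pos dd lt by simp
    then show False using i1 i2 eq by linarith
  qed
  have Idx: "(\<integral>\<theta>. real (\<delta> \<theta>) * \<xi> \<theta> \<partial>F) = (1/c) * Edt + (a*m/c) * E2"
  proof -
    have "(\<integral>\<theta>. real (\<delta> \<theta>) * \<xi> \<theta> \<partial>F) = (\<integral>\<theta>. (1/c) * (real (\<delta> \<theta>) * \<theta>) + (a*m/c) * (real (\<delta> \<theta>))\<^sup>2 \<partial>F)"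
    proof (rule integral_cong_AE)
      show "AE \<theta> in F. real (\<delta> \<theta>) * \<xi> \<theta> = (1/c) * (real (\<delta> \<theta>) * \<theta>) + (a*m/c) * (real (\<delta> \<theta>))\<^sup>2"
        using AES
      proof eventually_elim
        case (elim \<theta>)
        show ?case using cpos by (simp add: xi_eq[OF elim] field_simps power2_eq_square)
      qed
    qed auto
    also have "\<dots> = (1/c) * Edt + (a*m/c) * E2"
      by (subst Bochner_Integration.integral_add) (use int_dt int_dd in \<open>auto simp: Edt_def E2_def\<close>)
    finally show ?thesis .
  qed
  have mrel: "m * (c * \<mu> - a * E2) = Edt"
  proof -
    have "m * \<mu> = (1/c) * Edt + (a*m/c) * E2" using Idx mu_pos by (simp add: m_def')
    then show ?thesis using cpos by (simp add: field_simps)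
  qed
  have spaceF: "space F = UNIV" using sets_eq_imp_space_eq[OF sF] by simp
  have notAE: "\<not> (AE \<theta> in F. real (\<delta> \<theta>) = r)" for r
  proof
    assume ae: "AE \<theta> in F. real (\<delta> \<theta>) = r"
    obtain d1 d2 where d12: "d1 \<noteq> d2" "measure F {\<theta> \<in> space F. \<delta> \<theta> = d1} > 0" "measure F {\<theta> \<in> space F. \<delta> \<theta> = d2} > 0"
      using assms(12) unfolding two_degrees_def by blast
    have z: "measure F {\<theta> \<in> space F. \<delta> \<theta> = d} = 0" if dr: "real d \<noteq> r" for d
    proof -
      have "AE \<theta> in F. \<delta> \<theta> \<noteq> d" using ae by eventually_elim (use dr in auto)
      moreover have "{x\<in>space F. \<not> \<delta> x \<noteq> d} \<in> sets F" by measurable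
      ultimately have "emeasure F {x\<in>space F. \<not> \<delta> x \<noteq> d} = 0"
        using AE_iff_measurable[OF _ refl, where M=F and P="\<lambda>x. \<delta> x \<noteq> d"] by simp
      then show ?thesis by (simp add: F.emeasure_eq_measure)
    qed
    have "real d1 \<noteq> r \<or> real d2 \<noteq> r" using d12(1) by auto
    then show False using z d12 by fastforce
  qed
  have atomless: "AE \<theta> in F. \<theta> \<noteq> t" for t
  proof -
    have "{x\<in>space F. \<not> x \<noteq> t} = {t}" using spaceF by auto
    moreover have "emeasure F {t} = 0" using assms(7) by (simp add: F.emeasure_eq_measure)
    moreover have "{t} \<in> sets F" by (simp add: sF)
    ultimately show ?thesis using AE_iff_measurable[OF _ refl, where M=F and P="\<lambda>x. x \<noteq> t"] by simp
  qed
  have Et_pos: "Et > 0"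
  proof -
    have nn: "AE \<theta> in F. 0 \<le> \<theta>" using AES by eventually_elim (use Snn in auto)
    have "Et \<ge> 0" unfolding Et_def by (rule integral_nonneg_AE[OF nn])
    moreover have "Et \<noteq> 0"
    proof
      assume "Et = 0"
      then have "AE \<theta> in F. \<theta> = 0" using integral_nonneg_eq_0_iff_AE[OF int_t nn] by (simp add: Et_def)
      then have "AE \<theta> in F. False" using atomless[of 0] by eventually_elim auto
      then show False by (simp add: F.AE_False)
    qed
    ultimately show ?thesis by simp
  qed
  have int_c: "integrable F (\<lambda>\<theta>. r)" for r :: real by simp
  have var: "E2 > \<mu>\<^sup>2"
  proof -
    let ?f = "\<lambda>\<theta>. (real (\<delta> \<theta>))\<^sup>2 + (-2*\<mu>) * real (\<delta> \<theta>) + \<mu>\<^sup>2"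
    have fint: "integrable F ?f" using int_dd int_d by auto
    have fsq: "?f \<theta> = (real (\<delta> \<theta>) - \<mu>)\<^sup>2" for \<theta> by (simp add: power2_eq_square algebra_simps)
    have nn: "AE \<theta> in F. 0 \<le> ?f \<theta>" unfolding fsq by simp
    have If: "(\<integral>\<theta>. ?f \<theta> \<partial>F) = E2 - \<mu>\<^sup>2"
      using int_dd int_d by (simp add: E2_def \<mu>_def power2_eq_square F.prob_space)
    have "(\<integral>\<theta>. ?f \<theta> \<partial>F) \<noteq> 0"
    proof
      assume "(\<integral>\<theta>. ?f \<theta> \<partial>F) = 0"
      then have "AE \<theta> in F. ?f \<theta> = 0" using integral_nonneg_eq_0_iff_AE[OF fint nn] by simp
      then have "AE \<theta> in F. real (\<delta> \<theta>) = \<mu>"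
      proof eventually_elim
        case (elim \<theta>)
        then have "(real (\<delta> \<theta>) - \<mu>)\<^sup>2 = 0" by (simp only: fsq)
        then show ?case by simp
      qed
      then show False using notAE by blast
    qed
    moreover have "(\<integral>\<theta>. ?f \<theta> \<partial>F) \<ge> 0" by (rule integral_nonneg_AE[OF nn])
    ultimately show ?thesis using If by simp
  qed
  have mu_le: "\<mu> \<le> real n - 1"
  proof -
    have "\<mu> \<le> (\<integral>\<theta>. (real n - 1) \<partial>F)" unfolding \<mu>_def
      by (rule integral_mono_AE[OF int_d int_c]) (use AES in eventually_elim, use dR in auto)
    then show ?thesis by (simp add: F.prob_space)
  qed
  have E2_le: "E2 \<le> (real n - 1) * \<mu>"
  proof -
    have "E2 \<le> (\<integral>\<theta>. (real n - 1) * real (\<delta> \<theta>) \<partial>F)" unfolding E2_def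
    proof (rule integral_mono_AE[OF int_dd])
      show "integrable F (\<lambda>\<theta>. (real n - 1) * real (\<delta> \<theta>))" using int_d by simp
      show "AE \<theta> in F. (real (\<delta> \<theta>))\<^sup>2 \<le> (real n - 1) * real (\<delta> \<theta>)" using AES
      proof eventually_elim
        case (elim \<theta>)
        then have "real (\<delta> \<theta>) * real (\<delta> \<theta>) \<le> (real n - 1) * real (\<delta> \<theta>)"
          using dR by (intro mult_right_mono) auto
        then show ?case by (simp add: power2_eq_square)
      qed
    qed
    then show ?thesis by (simp add: \<mu>_def)
  qed
  have cov: "Edt > \<mu> * Et"
  proof -
    define A where "A = {\<theta>\<in>S. real (\<delta> \<theta>) < \<mu>}"
    define t0 where "t0 = (if A = {} then -1 else Sup A)"
    have bddA: "bdd_above A" unfolding A_def using Bt by (intro bdd_aboveI[of _ Bt]) auto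
    have pos: "0 \<le> (real (\<delta> \<theta>) - \<mu>) * (\<theta> - t0)" if th: "\<theta> \<in> S" for \<theta>
    proof (cases "real (\<delta> \<theta>) < \<mu>")
      case True
      then have "\<theta> \<in> A" "A \<noteq> {}" using th by (auto simp: A_def)
      then have "\<theta> \<le> t0" using cSup_upper[OF _ bddA] by (auto simp: t0_def)
      then show ?thesis using True by (intro mult_nonpos_nonpos) auto
    next
      case False
      show ?thesis
      proof (cases "real (\<delta> \<theta>) = \<mu>")
        case True then show ?thesis by simp
      next
        case False2: False
        then have gt: "real (\<delta> \<theta>) > \<mu>" using False by simp
        have below: "x \<le> \<theta>" if "x \<in> A" for x
        proof (rule ccontr)
          assume "\<not> x \<le> \<theta>"
          then have "\<delta> \<theta> \<le> \<delta> x" using mono th that by (auto simp: A_def)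
          then show False using gt that by (auto simp: A_def)
        qed
        have "t0 \<le> \<theta>"
        proof (cases "A = {}")
          case True then show ?thesis using th Snn by (auto simp: t0_def)
        next
          case False then show ?thesis using cSup_least[OF False] below by (auto simp: t0_def)
        qed
        then show ?thesis using gt by (intro mult_nonneg_nonneg) auto
      qed
    qed
    let ?f = "\<lambda>\<theta>. real (\<delta> \<theta>) * \<theta> + (-t0) * real (\<delta> \<theta>) + (-\<mu>) * \<theta> + \<mu> * t0"
    have fe: "?f \<theta> = (real (\<delta> \<theta>) - \<mu>) * (\<theta> - t0)" for \<theta> by (simp add: algebra_simps)
    have fint: "integrable F ?f" using int_dt int_d int_t by auto
    have nn: "AE \<theta> in F. 0 \<le> ?f \<theta>" using AES
    proof eventually_elim
      case (elim \<theta>)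
      show ?case unfolding fe by (rule pos[OF elim])
    qed
    have If: "(\<integral>\<theta>. ?f \<theta> \<partial>F) = Edt - \<mu> * Et"
      using int_dt int_d int_t by (simp add: Edt_def \<mu>_def Et_def F.prob_space)
    have "(\<integral>\<theta>. ?f \<theta> \<partial>F) \<noteq> 0"
    proof
      assume "(\<integral>\<theta>. ?f \<theta> \<partial>F) = 0"
      then have "AE \<theta> in F. ?f \<theta> = 0" using integral_nonneg_eq_0_iff_AE[OF fint nn] by simp
      then have "AE \<theta> in F. real (\<delta> \<theta>) = \<mu>" using atomless[of t0]
      proof eventually_elim
        case (elim \<theta>)
        then have "(real (\<delta> \<theta>) - \<mu>) * (\<theta> - t0) = 0" by (simp only: fe)
        then show ?case using elim(2) by simp
      qed
      then show False using notAE by blast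
    qed
    moreover have "(\<integral>\<theta>. ?f \<theta> \<partial>F) \<ge> 0" by (rule integral_nonneg_AE[OF nn])
    ultimately show ?thesis using If by simp
  qed
  have a0: "a \<ge> 0" using assms(2) by simp
  define D where "D = distr F (count_space UNIV) \<delta>"
  have PD: "prob_space D" unfolding D_def by (rule F.prob_space_distr[OF dm])
  interpret D: prob_space D by (rule PD)
  interpret P: pair_prob_space F D
    by (simp add: pair_prob_space_def pair_sigma_finite_def prob_space_imp_sigma_finite F.prob_space_axioms PD)
  have QP: "Q_perp F \<delta> = F \<Otimes>\<^sub>M D" by (simp add: Q_perp_def D_def)
  have gmD: "g \<in> borel_measurable D" for g :: "nat \<Rightarrow> real" by (simp add: D_def)
  have intD: "(\<integral>d. g d \<partial>D) = (\<integral>\<theta>. g (\<delta> \<theta>) \<partial>F)" for g :: "nat \<Rightarrow> real"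
    unfolding D_def by (rule integral_distr[OF dm]) simp
  have spaceD: "space D = UNIV" by (simp add: D_def)
  have AED: "AE d in D. d \<le> n - 1"
  proof -
    have "AE \<theta> in F. \<delta> \<theta> \<le> n - 1" using AES by eventually_elim (use dle in auto)
    then show ?thesis unfolding D_def by (subst AE_distr_iff[OF dm]) auto
  qed
  have AEQ: "AE p in F \<Otimes>\<^sub>M D. fst p \<in> S \<and> snd p \<le> n - 1"
  proof -
    have "{x\<in>space (F \<Otimes>\<^sub>M D). fst x \<in> S \<and> snd x \<le> n - 1} = S \<times> {..n-1}"
      by (auto simp: space_pair_measure spaceF spaceD)
    moreover have "S \<times> {..n-1} \<in> sets (F \<Otimes>\<^sub>M D)"
      by (rule pair_measureI[OF Ssets]) (simp add: D_def)
    ultimately have ms: "{x\<in>space (F \<Otimes>\<^sub>M D). fst x \<in> S \<and> snd x \<le> n - 1} \<in> sets (F \<Otimes>\<^sub>M D)" by simp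
    have "AE x in F. AE y in D. x \<in> S \<and> y \<le> n - 1"
      using AES
    proof eventually_elim
      case (elim x) show ?case using AED by eventually_elim (use elim in auto)
    qed
    then show ?thesis using P.AE_pair_iff[OF ms] by simp
  qed
  define B0 where "B0 = max Bt 0"
  have AEt: "AE \<theta> in F. \<bar>\<theta>\<bar> \<le> B0" using AES by eventually_elim (use Bt in \<open>auto simp: B0_def\<close>)
  have AEd: "AE d in D. \<bar>real d\<bar> \<le> real n" using AED by eventually_elim auto
  have AEd2: "AE d in D. \<bar>(real d)\<^sup>2\<bar> \<le> real n ^ 2" using AED
    by eventually_elim (auto simp: power_mono)
  have AE1F: "AE \<theta> in F. \<bar>1::real\<bar> \<le> 1" and AE1D: "AE d in D. \<bar>1::real\<bar> \<le> 1" by auto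
  have B0nn: "0 \<le> B0" by (simp add: B0_def)
  note PI = prod_int[OF F.prob_space_axioms PD]
  have I_ts: "integrable (F \<Otimes>\<^sub>M D) (\<lambda>p. fst p * real (snd p))"
    "(\<integral>p. fst p * real (snd p) \<partial>(F \<Otimes>\<^sub>M D)) = Et * \<mu>"
    using PI[OF idm gmD AEt AEd B0nn] by (simp_all add: intD Et_def \<mu>_def)
  have I_s: "integrable (F \<Otimes>\<^sub>M D) (\<lambda>p. real (snd p))"
    "(\<integral>p. real (snd p) \<partial>(F \<Otimes>\<^sub>M D)) = \<mu>"
    using PI[of "\<lambda>_. 1" "\<lambda>d. real d", OF _ gmD AE1F AEd] by (simp_all add: intD \<mu>_def F.prob_space)
  have I_ss: "integrable (F \<Otimes>\<^sub>M D) (\<lambda>p. (real (snd p))\<^sup>2)"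
    "(\<integral>p. (real (snd p))\<^sup>2 \<partial>(F \<Otimes>\<^sub>M D)) = E2"
    using PI[of "\<lambda>_. 1" "\<lambda>d. (real d)\<^sup>2", OF _ gmD AE1F AEd2] by (simp_all add: intD E2_def F.prob_space)
  have I_t: "integrable (F \<Otimes>\<^sub>M D) (\<lambda>p. fst p)"
    "(\<integral>p. fst p \<partial>(F \<Otimes>\<^sub>M D)) = Et"
    using PI[of "\<lambda>\<theta>. \<theta>" "\<lambda>_. 1", OF idm gmD AEt AE1D B0nn] by (simp_all add: Et_def D.prob_space)
  define Zf where "Zf = (\<lambda>p. x_friend_perp (fst p) (snd p))"
  have cf: "comp_eq n a c S (Q_perp F \<delta>) (Q_nbr_exp (Q_perp F \<delta>)) x_friend_perp"
    using assms(13) by (simp add: friend_eq_def)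
  have Zfm: "Zf \<in> borel_measurable (F \<Otimes>\<^sub>M D)" and Zfnn: "\<forall>\<theta>\<in>S. \<forall>d\<le>n - 1. 0 \<le> x_friend_perp \<theta> d"
    using cf by (simp_all add: comp_eq_def QP Zf_def)
  define Gf where "Gf = Q_nbr_exp (Q_perp F \<delta>) Zf"
  have Gf_def': "Gf = (\<integral>p. real (snd p) * Zf p \<partial>(F \<Otimes>\<^sub>M D)) / \<mu>"
    by (simp add: Gf_def Q_nbr_exp_def QP I_s)
  have Gf_nn: "Gf \<ge> 0"
  proof -
    have "(\<integral>p. real (snd p) * Zf p \<partial>(F \<Otimes>\<^sub>M D)) \<ge> 0"
      by (rule integral_nonneg_AE) (use AEQ in eventually_elim, use Zfnn in \<open>auto simp: Zf_def\<close>)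
    then show ?thesis using mu_pos by (simp add: Gf_def')
  qed
  have xf: "\<forall>\<theta>\<in>S. \<forall>d\<le>n - 1. x_friend_perp \<theta> d = (\<theta> + a * real d * Gf) / c"
  proof -
    have "0 \<le> Q_nbr_exp (Q_perp F \<delta>) (\<lambda>p. x_friend_perp (fst p) (snd p))" using Gf_nn unfolding Gf_def Zf_def .
    from comp_formula[OF cf cpos assms(10) a0 this] show ?thesis unfolding Gf_def Zf_def .
  qed
  have Gf_rel: "Gf * (c * \<mu> - a * E2) = Et * \<mu>"
  proof -
    have "(\<integral>p. real (snd p) * Zf p \<partial>(F \<Otimes>\<^sub>M D)) =
        (\<integral>p. (1/c) * (fst p * real (snd p)) + (a*Gf/c) * (real (snd p))\<^sup>2 \<partial>(F \<Otimes>\<^sub>M D))"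
    proof (rule integral_cong_AE)
      show "(\<lambda>p. real (snd p) * Zf p) \<in> borel_measurable (F \<Otimes>\<^sub>M D)" by (rule borel_measurable_times[OF borel_measurable_integrable[OF I_s(1)] Zfm])
      show "(\<lambda>p. (1/c) * (fst p * real (snd p)) + (a*Gf/c) * (real (snd p))\<^sup>2) \<in> borel_measurable (F \<Otimes>\<^sub>M D)"
        using I_ts(1) I_ss(1) by (intro borel_measurable_integrable) auto
      show "AE p in F \<Otimes>\<^sub>M D. real (snd p) * Zf p = (1/c) * (fst p * real (snd p)) + (a*Gf/c) * (real (snd p))\<^sup>2"
        using AEQ
      proof eventually_elim
        case (elim p)
        then have xe: "x_friend_perp (fst p) (snd p) = (fst p + a * real (snd p) * Gf) / c" using xf by blast
        show ?case unfolding Zf_def xe using cpos by (simp add: field_simps power2_eq_square)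
      qed
    qed
    also have "\<dots> = (1/c) * (Et * \<mu>) + (a*Gf/c) * E2"
      by (subst Bochner_Integration.integral_add) (use I_ts I_ss in auto)
    finally have "Gf * \<mu> = (1/c) * (Et * \<mu>) + (a*Gf/c) * E2" using mu_pos by (simp add: Gf_def')
    then show ?thesis using cpos by (simp add: field_simps)
  qed
  define Zp where "Zp = (\<lambda>p. x_soc_perp (fst p) (snd p))"
  have cp: "comp_eq n a c S (Q_perp F \<delta>) (Q_exp (Q_perp F \<delta>)) x_soc_perp"
    using assms(15) by (simp add: soc_eq_def)
  have Zpm: "Zp \<in> borel_measurable (F \<Otimes>\<^sub>M D)" and Zpnn: "\<forall>\<theta>\<in>S. \<forall>d\<le>n - 1. 0 \<le> x_soc_perp \<theta> d"
    using cp by (simp_all add: comp_eq_def QP Zp_def)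
  define Gp where "Gp = Q_exp (Q_perp F \<delta>) Zp"
  have Gp_def': "Gp = (\<integral>p. Zp p \<partial>(F \<Otimes>\<^sub>M D))" by (simp add: Gp_def Q_exp_def QP)
  have Gp_nn: "Gp \<ge> 0" unfolding Gp_def'
    by (rule integral_nonneg_AE) (use AEQ in eventually_elim, use Zpnn in \<open>auto simp: Zp_def\<close>)
  have xp: "\<forall>\<theta>\<in>S. \<forall>d\<le>n - 1. x_soc_perp \<theta> d = (\<theta> + a * real d * Gp) / c"
  proof -
    have "0 \<le> Q_exp (Q_perp F \<delta>) (\<lambda>p. x_soc_perp (fst p) (snd p))" using Gp_nn unfolding Gp_def Zp_def .
    from comp_formula[OF cp cpos assms(10) a0 this] show ?thesis unfolding Gp_def Zp_def .
  qed
  have Gp_rel: "Gp * (c - a * \<mu>) = Et"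
  proof -
    have "(\<integral>p. Zp p \<partial>(F \<Otimes>\<^sub>M D)) = (\<integral>p. (1/c) * fst p + (a*Gp/c) * real (snd p) \<partial>(F \<Otimes>\<^sub>M D))"
    proof (rule integral_cong_AE)
      show "Zp \<in> borel_measurable (F \<Otimes>\<^sub>M D)" by (rule Zpm)
      show "(\<lambda>p. (1/c) * fst p + (a*Gp/c) * real (snd p)) \<in> borel_measurable (F \<Otimes>\<^sub>M D)"
        using I_t(1) I_s(1) by (intro borel_measurable_integrable) auto
      show "AE p in F \<Otimes>\<^sub>M D. Zp p = (1/c) * fst p + (a*Gp/c) * real (snd p)"
        using AEQ
      proof eventually_elim
        case (elim p)
        then have xe: "x_soc_perp (fst p) (snd p) = (fst p + a * real (snd p) * Gp) / c" using xp by blast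
        show ?case unfolding Zp_def xe using cpos by (simp add: field_simps)
      qed
    qed
    also have "\<dots> = (1/c) * Et + (a*Gp/c) * \<mu>"
      by (subst Bochner_Integration.integral_add) (use I_t I_s in auto)
    finally have "Gp = (1/c) * Et + (a*Gp/c) * \<mu>" using Gp_def' by linarith
    then show ?thesis using cpos by (simp add: field_simps)
  qed
  define Ze where "Ze = (\<lambda>p. x_soc_end (fst p) (snd p))"
  have ce: "comp_eq n a c S (Q_end F \<delta>) (Q_exp (Q_end F \<delta>)) x_soc_end"
    using assms(14) by (simp add: soc_eq_def)
  have Zem0: "Ze \<in> borel_measurable (Q_end F \<delta>)" and Zenn: "\<forall>\<theta>\<in>S. \<forall>d\<le>n - 1. 0 \<le> x_soc_end \<theta> d"
    using ce by (simp_all add: comp_eq_def Ze_def)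
  have Tm: "(\<lambda>\<theta>. (\<theta>, \<delta> \<theta>)) \<in> measurable F (borel \<Otimes>\<^sub>M count_space UNIV)"
    by (rule measurable_Pair[OF idm dm])
  have Zem: "Ze \<in> borel_measurable (borel \<Otimes>\<^sub>M count_space UNIV)"
    using Zem0 by (simp add: Q_end_def)
  have intE: "(\<integral>p. Ze p \<partial>Q_end F \<delta>) = (\<integral>\<theta>. x_soc_end \<theta> (\<delta> \<theta>) \<partial>F)"
    unfolding Q_end_def by (subst integral_distr[OF Tm Zem]) (simp add: Ze_def)
  define Ge where "Ge = Q_exp (Q_end F \<delta>) Ze"
  have Ge_def': "Ge = (\<integral>\<theta>. x_soc_end \<theta> (\<delta> \<theta>) \<partial>F)" by (simp add: Ge_def Q_exp_def intE)
  have Ge_nn: "Ge \<ge> 0" unfolding Ge_def'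
    by (rule integral_nonneg_AE) (use AES in eventually_elim, use Zenn dle in auto)
  have xe: "\<forall>\<theta>\<in>S. \<forall>d\<le>n - 1. x_soc_end \<theta> d = (\<theta> + a * real d * Ge) / c"
  proof -
    have "0 \<le> Q_exp (Q_end F \<delta>) (\<lambda>p. x_soc_end (fst p) (snd p))" using Ge_nn unfolding Ge_def Ze_def .
    from comp_formula[OF ce cpos assms(10) a0 this] show ?thesis unfolding Ge_def Ze_def .
  qed
  have Ge_rel: "Ge * (c - a * \<mu>) = Et"
  proof -
    have "(\<integral>\<theta>. x_soc_end \<theta> (\<delta> \<theta>) \<partial>F) = (\<integral>\<theta>. (1/c) * \<theta> + (a*Ge/c) * real (\<delta> \<theta>) \<partial>F)"
    proof (rule integral_cong_AE)
      show "(\<lambda>\<theta>. x_soc_end \<theta> (\<delta> \<theta>)) \<in> borel_measurable F"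
        using measurable_comp[OF Tm Zem] by (simp add: Ze_def comp_def)
      show "(\<lambda>\<theta>. (1/c) * \<theta> + (a*Ge/c) * real (\<delta> \<theta>)) \<in> borel_measurable F" by measurable
      show "AE \<theta> in F. x_soc_end \<theta> (\<delta> \<theta>) = (1/c) * \<theta> + (a*Ge/c) * real (\<delta> \<theta>)"
        using AES
      proof eventually_elim
        case (elim \<theta>)
        then have xx: "x_soc_end \<theta> (\<delta> \<theta>) = (\<theta> + a * real (\<delta> \<theta>) * Ge) / c" using xe dle by blast
        show ?case unfolding xx using cpos by (simp add: field_simps)
      qed
    qed
    also have "\<dots> = (1/c) * Et + (a*Ge/c) * \<mu>"
      by (subst Bochner_Integration.integral_add) (use int_t int_d in \<open>auto simp: Et_def \<mu>_def\<close>)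
    finally have "Ge = (1/c) * Et + (a*Ge/c) * \<mu>" using Ge_def' by linarith
    then show ?thesis using cpos by (simp add: field_simps)
  qed
  define K where "K = c * \<mu> - a * E2"
  have K_pos: "K > 0"
  proof -
    have "a * E2 \<le> a * ((real n - 1) * \<mu>)" using E2_le a0 by (rule mult_left_mono)
    moreover have "(c - a * (real n - 1)) * \<mu> > 0" using assms(3) mu_pos by simp
    ultimately show ?thesis unfolding K_def by (simp add: algebra_simps)
  qed
  have L_pos: "c - a * \<mu> > 0"
  proof -
    have "a * \<mu> \<le> a * (real n - 1)" using mu_le a0 by (rule mult_left_mono)
    then show ?thesis using assms(3) by linarith
  qed
  have m_gt: "m > Gf"
  proof -
    have "(m - Gf) * K = Edt - Et * \<mu>" using mrel Gf_rel by (simp add: K_def algebra_simps)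
    then have "(m - Gf) * K > 0" using cov by (simp add: algebra_simps)
    then show ?thesis using K_pos by (simp add: zero_less_mult_iff)
  qed
  have Gep: "Ge = Gp"
  proof -
    have "(Ge - Gp) * (c - a * \<mu>) = 0" using Ge_rel Gp_rel by (simp add: algebra_simps)
    then show ?thesis using L_pos by simp
  qed
  have Gf_gt: "Gf > Ge"
  proof -
    have Ge_pos: "Ge > 0" using Ge_rel Et_pos L_pos Ge_nn by (cases "Ge = 0") auto
    have "a * \<mu>\<^sup>2 < a * E2" using var assms(2) by simp
    then have KL: "K < \<mu> * (c - a * \<mu>)" unfolding K_def by (simp add: power2_eq_square algebra_simps)
    have g1: "Gf * K = Et * \<mu>" using Gf_rel by (simp add: K_def)
    have "Ge * (\<mu> * (c - a * \<mu>)) = (Ge * (c - a * \<mu>)) * \<mu>" by (simp add: algebra_simps)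
    also have "\<dots> = Et * \<mu>" using Ge_rel by simp
    finally have "Gf * K = Ge * (\<mu> * (c - a * \<mu>))" using g1 by linarith
    moreover have "Ge * K < Ge * (\<mu> * (c - a * \<mu>))" using KL Ge_pos by simp
    ultimately have "Ge * K < Gf * K" by simp
    then show ?thesis using K_pos by simp
  qed
  have final: "\<xi> \<theta> > x_friend_perp \<theta> (\<delta> \<theta>) \<and>
            x_friend_perp \<theta> (\<delta> \<theta>) > x_soc_end \<theta> (\<delta> \<theta>) \<and>
            x_soc_end \<theta> (\<delta> \<theta>) = x_soc_perp \<theta> (\<delta> \<theta>)"
    if th: "\<theta> \<in> S" and dp: "\<delta> \<theta> > 0" for \<theta>
  proof -
    have dl: "\<delta> \<theta> \<le> n - 1" using dle th by blast
    have ad: "a * real (\<delta> \<theta>) > 0" using dp assms(2) by simp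
    have e1: "\<xi> \<theta> = (\<theta> + a * real (\<delta> \<theta>) * m) / c" by (rule xi_eq[OF th])
    have e2: "x_friend_perp \<theta> (\<delta> \<theta>) = (\<theta> + a * real (\<delta> \<theta>) * Gf) / c" using xf th dl by blast
    have e3: "x_soc_end \<theta> (\<delta> \<theta>) = (\<theta> + a * real (\<delta> \<theta>) * Ge) / c" using xe th dl by blast
    have e4: "x_soc_perp \<theta> (\<delta> \<theta>) = (\<theta> + a * real (\<delta> \<theta>) * Gp) / c" using xp th dl by blast
    have "a * real (\<delta> \<theta>) * Gf < a * real (\<delta> \<theta>) * m" using ad m_gt by (rule mult_strict_left_mono[rotated])
    then have i1: "(\<theta> + a * real (\<delta> \<theta>) * Gf) / c < (\<theta> + a * real (\<delta> \<theta>) * m) / c"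
      using cpos by (simp add: divide_strict_right_mono)
    have "a * real (\<delta> \<theta>) * Ge < a * real (\<delta> \<theta>) * Gf" using ad Gf_gt by (rule mult_strict_left_mono[rotated])
    then have i2: "(\<theta> + a * real (\<delta> \<theta>) * Ge) / c < (\<theta> + a * real (\<delta> \<theta>) * Gf) / c"
      using cpos by (simp add: divide_strict_right_mono)
    show ?thesis using e1 e2 e3 e4 i1 i2 Gep by simp
  qed
  show ?thesis using mono final by blast
qed


end
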